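(* For all terms $t,s$ of the distributive $\lambda$-calculus, if $t\to_{\mathsf{dist}}^* s$ and $s$ is a $\to_{\mathsf{dist}}$-normal form, then $t\to_{LO}^* s$.
   Context: Terms of the distributive $\lambda$-calculus are given by the grammar $t,s,u ::= x \mid \lambda x.t \mid ts \mid \langle t,s\rangle \mid \pi_1 t \mid \pi_2 t$, considered up to $\alpha$-renaming; $t\{x:=s\}$ denotes capture-avoiding substitution. The top-level rules are: $(\lambda x.t)s \mapsto_\beta t\{x:=s\}$; $\pi_i\langle t_1,t_2\rangle \mapsto_{\pi_i} t_i$ for $i=1,2$; $\langle t,s\rangle u \mapsto_{@_\times} \langle tu, su\rangle$; $\pi_i(\lambda x.t)\mapsto_{\pi_\lambda} \lambda x.\pi_i t$ for $i=1,2$. The relation $\to_{\mathsf{dist}}$ is the closure of the union of these rules under all term constructors; $\to^*$ denotes reflexive-transitive closure; a normal form is a term with no $\to_{\mathsf{dist}}$-reduct. A term is neutral if it is a variable, an application $ts$, or a projection $\pi_i t$. Leftmost-outermost reduction $\to_{LO}$ is the smallest relation closed under the rules: $(\lambda x.t)s\to_{LO} t\{x:=s\}$; $\pi_i\langle t_1,t_2\rangle\to_{LO} t_i$ ($i=1,2$); $\langle t,s\rangle u\to_{LO}\langle tu,su\rangle$; $\pi_i(\lambda x.t)\to_{LO}\lambda x.\pi_i t$ ($i=1,2$); if $t\to_{LO}s$ and $t$ is neutral then $tu\to_{LO}su$; if $t\to_{LO}s$ then $\lambda x.t\to_{LO}\lambda x.s$; if $u$ is neutral and normal and $t\to_{LO}s$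 then $ut\to_{LO}us$; if $t\to_{LO}s$ then $\pi_i t\to_{LO}\pi_i s$; if $t\to_{LO}s$ then $\langle t,u\rangle\to_{LO}\langle s,u\rangle$; if $u$ is normal and $t\to_{LO}s$ then $\langle u,t\rangle\to_{LO}\langle u,s\rangle$. *)

theory Defs
  imports Main
begin

text \<open>Terms of the distributive lambda-calculus, up to alpha-renaming,
represented with de Bruijn indices.\<close>

datatype dterm =
    Var nat
  | Lam dterm
  | App dterm dterm
  | Pair dterm dterm
  | Prj1 dterm
  | Prj2 dterm

primrec lift :: "dterm \<Rightarrow> nat \<Rightarrow> dterm" where
  "lift (Var i) k = (if i < k then Var i else Var (Suc i))"
| "lift (Lam t) k = Lam (lift t (Suc k))"
| "lift (App t s) k = App (lift t k) (lift s k)"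
| "lift (Pair t s) k = Pair (lift t k) (lift s k)"
| "lift (Prj1 t) k = Prj1 (lift t k)"
| "lift (Prj2 t) k = Prj2 (lift t k)"

primrec subst :: "dterm \<Rightarrow> nat \<Rightarrow> dterm \<Rightarrow> dterm" where
  "subst (Var i) k s = (if k < i then Var (i - 1) else if i = k then s else Var i)"
| "subst (Lam t) k s = Lam (subst t (Suc k) (lift s 0))"
| "subst (App t u) k s = App (subst t k s) (subst u k s)"
| "subst (Pair t u) k s = Pair (subst t k s) (subst u k s)"
| "subst (Prj1 t) k s = Prj1 (subst t k s)"
| "subst (Prj2 t) k s = Prj2 (subst t k s)"

inductive dist :: "dterm \<Rightarrow> dterm \<Rightarrow> bool" where
  beta: "dist (App (Lam t) s) (subst t 0 s)"
| pi1: "dist (Prj1 (Pair t1 t2)) t1"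
| pi2: "dist (Prj2 (Pair t1 t2)) t2"
| app_pair: "dist (App (Pair t s) u) (Pair (App t u) (App s u))"
| pi1_lam: "dist (Prj1 (Lam t)) (Lam (Prj1 t))"
| pi2_lam: "dist (Prj2 (Lam t)) (Lam (Prj2 t))"
| lam: "dist t t' \<Longrightarrow> dist (Lam t) (Lam t')"
| appL: "dist t t' \<Longrightarrow> dist (App t s) (App t' s)"
| appR: "dist s s' \<Longrightarrow> dist (App t s) (App t s')"
| pairL: "dist t t' \<Longrightarrow> dist (Pair t s) (Pair t' s)"
| pairR: "dist s s' \<Longrightarrow> dist (Pair t s) (Pair t s')"
| prj1: "dist t t' \<Longrightarrow> dist (Prj1 t) (Prj1 t')"
| prj2: "dist t t' \<Longrightarrow> dist (Prj2 t) (Prj2 t')"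

definition normal :: "dterm \<Rightarrow> bool" where
  "normal t \<longleftrightarrow> \<not> (\<exists>u. dist t u)"

fun neutral :: "dterm \<Rightarrow> bool" where
  "neutral (Var x) = True"
| "neutral (App t s) = True"
| "neutral (Prj1 t) = True"
| "neutral (Prj2 t) = True"
| "neutral (Lam t) = False"
| "neutral (Pair t s) = False"

inductive lo :: "dterm \<Rightarrow> dterm \<Rightarrow> bool" where
  lo_beta: "lo (App (Lam t) s) (subst t 0 s)"
| lo_pi1: "lo (Prj1 (Pair t1 t2)) t1"
| lo_pi2: "lo (Prj2 (Pair t1 t2)) t2"
| lo_app_pair: "lo (App (Pair t s) u) (Pair (App t u) (App s u))"
| lo_pi1_lam: "lo (Prj1 (Lam t)) (Lam (Prj1 t))"
| lo_pi2_lam: "lo (Prj2 (Lam t)) (Lam (Prj2 t))"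
| lo_appL: "lo t s \<Longrightarrow> neutral t \<Longrightarrow> lo (App t u) (App s u)"
| lo_lam: "lo t s \<Longrightarrow> lo (Lam t) (Lam s)"
| lo_appR: "neutral u \<Longrightarrow> normal u \<Longrightarrow> lo t s \<Longrightarrow> lo (App u t) (App u s)"
| lo_prj1: "lo t s \<Longrightarrow> lo (Prj1 t) (Prj1 s)"
| lo_prj2: "lo t s \<Longrightarrow> lo (Prj2 t) (Prj2 s)"
| lo_pairL: "lo t s \<Longrightarrow> lo (Pair t u) (Pair s u)"
| lo_pairR: "normal u \<Longrightarrow> lo t s \<Longrightarrow> lo (Pair u t) (Pair u s)"

end

theory Submission
  imports Defs
begin

lemma lift_lift: "i < k + 1 \<Longrightarrow> lift (lift t i) (Suc k) = lift (lift t k) i"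
  by (induct t arbitrary: i k) auto

lemma lift_subst [simp]: "j < i + 1 \<Longrightarrow> lift (subst t j s) i = subst (lift t (i + 1)) j (lift s i)"
  by (induct t arbitrary: i j s) (simp_all add: diff_Suc lift_lift split: nat.split)

lemma lift_subst_lt: "i < j + 1 \<Longrightarrow> lift (subst t j s) i = subst (lift t i) (j + 1) (lift s i)"
  by (induct t arbitrary: i j s) (auto simp add: lift_lift)

lemma subst_lift [simp]: "subst (lift t k) k s = t"
  by (induct t arbitrary: k s) simp_all

lemma subst_subst: "i < j + 1 \<Longrightarrow>
  subst (subst t (Suc j) (lift v i)) i (subst u j v) = subst (subst t i u) j v"
  by (induct t arbitrary: i j u v) (simp_all add: diff_Suc lift_lift [symmetric] lift_subst_lt split: nat.split)

inductive h :: "dterm \<Rightarrow> dterm \<Rightarrow> bool" where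
  h_beta: "h (App (Lam t) s) (subst t 0 s)"
| h_pi1: "h (Prj1 (Pair t1 t2)) t1"
| h_pi2: "h (Prj2 (Pair t1 t2)) t2"
| h_app_pair: "h (App (Pair t s) u) (Pair (App t u) (App s u))"
| h_pi1_lam: "h (Prj1 (Lam t)) (Lam (Prj1 t))"
| h_pi2_lam: "h (Prj2 (Lam t)) (Lam (Prj2 t))"
| h_app: "h t t' \<Longrightarrow> h (App t s) (App t' s)"
| h_prj1: "h t t' \<Longrightarrow> h (Prj1 t) (Prj1 t')"
| h_prj2: "h t t' \<Longrightarrow> h (Prj2 t) (Prj2 t')"

lemma h_lift: "h t t' \<Longrightarrow> h (lift t k) (lift t' k)"
proof (induct t t' arbitrary: k rule: h.induct)
  case (h_beta t s)
  then show ?case using h.h_beta[of "lift t (Suc k)" "lift s k"] by simp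
qed (auto intro: h.intros)

lemma h_subst: "h t t' \<Longrightarrow> h (subst t k s) (subst t' k s)"
proof (induct t t' arbitrary: k s rule: h.induct)
  case (h_beta t u)
  then show ?case using h.h_beta[of "subst t (Suc k) (lift s 0)" "subst u k s"]
    subst_subst[of 0 k t s u] by simp
qed (auto intro: h.intros)

lemma hs_app: "h\<^sup>*\<^sup>* t t' \<Longrightarrow> h\<^sup>*\<^sup>* (App t s) (App t' s)"
  by (induct rule: rtranclp_induct) (auto intro: rtranclp.rtrancl_into_rtrancl h_app)
lemma hs_prj1: "h\<^sup>*\<^sup>* t t' \<Longrightarrow> h\<^sup>*\<^sup>* (Prj1 t) (Prj1 t')"
  by (induct rule: rtranclp_induct) (auto intro: rtranclp.rtrancl_into_rtrancl h_prj1)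
lemma hs_prj2: "h\<^sup>*\<^sup>* t t' \<Longrightarrow> h\<^sup>*\<^sup>* (Prj2 t) (Prj2 t')"
  by (induct rule: rtranclp_induct) (auto intro: rtranclp.rtrancl_into_rtrancl h_prj2)
lemma hs_lift: "h\<^sup>*\<^sup>* t t' \<Longrightarrow> h\<^sup>*\<^sup>* (lift t k) (lift t' k)"
  by (induct rule: rtranclp_induct) (auto intro: rtranclp.rtrancl_into_rtrancl h_lift)
lemma hs_subst: "h\<^sup>*\<^sup>* t t' \<Longrightarrow> h\<^sup>*\<^sup>* (subst t k s) (subst t' k s)"
  by (induct rule: rtranclp_induct) (auto intro: rtranclp.rtrancl_into_rtrancl h_subst)

inductive st :: "dterm \<Rightarrow> dterm \<Rightarrow> bool" where
  st_var: "h\<^sup>*\<^sup>* t (Var x) \<Longrightarrow> st t (Var x)"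
| st_lam: "h\<^sup>*\<^sup>* t (Lam u) \<Longrightarrow> st u s \<Longrightarrow> st t (Lam s)"
| st_app: "h\<^sup>*\<^sup>* t (App u1 u2) \<Longrightarrow> st u1 s1 \<Longrightarrow> st u2 s2 \<Longrightarrow> st t (App s1 s2)"
| st_pair: "h\<^sup>*\<^sup>* t (Pair u1 u2) \<Longrightarrow> st u1 s1 \<Longrightarrow> st u2 s2 \<Longrightarrow> st t (Pair s1 s2)"
| st_prj1: "h\<^sup>*\<^sup>* t (Prj1 u) \<Longrightarrow> st u s \<Longrightarrow> st t (Prj1 s)"
| st_prj2: "h\<^sup>*\<^sup>* t (Prj2 u) \<Longrightarrow> st u s \<Longrightarrow> st t (Prj2 s)"

lemma st_refl: "st t t"
  by (induct t) (auto intro: st.intros)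

lemma st_pre: "h\<^sup>*\<^sup>* t u \<Longrightarrow> st u s \<Longrightarrow> st t s"
  by (erule st.cases) (auto intro: st.intros rtranclp_trans)

lemma st_lift: "st t t' \<Longrightarrow> st (lift t k) (lift t' k)"
proof (induct t t' arbitrary: k rule: st.induct)
  case (st_var t x)
  then show ?case using hs_lift[OF st_var, of k] by (auto intro: st.intros)
next
  case (st_lam t u s)
  then show ?case using hs_lift[OF st_lam(1), of k] by (auto intro: st.intros)
next
  case (st_app t u1 u2 s1 s2)
  then show ?case using hs_lift[OF st_app(1), of k] by (auto intro: st.intros)
next
  case (st_pair t u1 u2 s1 s2)
  then show ?case using hs_lift[OF st_pair(1), of k] by (auto intro: st.intros)
next
  case (st_prj1 t u s)
  then show ?case using hs_lift[OF st_prj1(1), of k] by (auto intro: st.intros)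
next
  case (st_prj2 t u s)
  then show ?case using hs_lift[OF st_prj2(1), of k] by (auto intro: st.intros)
qed

lemma st_subst: "st t t' \<Longrightarrow> st s s' \<Longrightarrow> st (subst t k s) (subst t' k s')"
proof (induct t t' arbitrary: k s s' rule: st.induct)
  case (st_var t x)
  have hh: "h\<^sup>*\<^sup>* (subst t k s) (subst (Var x) k s)" using hs_subst[OF st_var(1)] .
  show ?case
  proof (cases "k < x")
    case True then show ?thesis using hh by (auto intro: st.intros)
  next
    case False
    show ?thesis
    proof (cases "x = k")
      case True then show ?thesis using hh st_var(2) False by (auto intro: st_pre)
    next
      case False then show ?thesis using hh \<open>\<not> k < x\<close> by (auto intro: st.intros)
    qed
  qed
next
  case (st_lam t u s1)
  have "st (lift s 0) (lift s' 0)" using st_lam(4) by (rule st_lift)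
  then show ?case using hs_subst[OF st_lam(1), of k s] st_lam(3) by (auto intro: st.intros)
next
  case (st_app t u1 u2 s1 s2)
  then show ?case using hs_subst[OF st_app(1), of k s] by (auto intro: st.intros)
next
  case (st_pair t u1 u2 s1 s2)
  then show ?case using hs_subst[OF st_pair(1), of k s] by (auto intro: st.intros)
next
  case (st_prj1 t u s1)
  then show ?case using hs_subst[OF st_prj1(1), of k s] by (auto intro: st.intros)
next
  case (st_prj2 t u s1)
  then show ?case using hs_subst[OF st_prj2(1), of k s] by (auto intro: st.intros)
qed

lemma st_lam_inv: "st u (Lam s) \<Longrightarrow> \<exists>w. h\<^sup>*\<^sup>* u (Lam w) \<and> st w s"
  by (erule st.cases) auto
lemma st_pair_inv: "st u (Pair s1 s2) \<Longrightarrow> \<exists>w1 w2. h\<^sup>*\<^sup>* u (Pair w1 w2) \<and> st w1 s1 \<and> st w2 s2"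
  by (erule st.cases) auto

lemma st_step: "st t s \<Longrightarrow> dist s s' \<Longrightarrow> st t s'"
proof (induct t s arbitrary: s' rule: st.induct)
  case (st_var t x)
  then show ?case by (auto elim: dist.cases)
next
  case (st_lam t u s)
  from st_lam(4) show ?case
    by (cases rule: dist.cases) (use st_lam in \<open>auto intro: st.intros\<close>)
next
  case (st_app t u1 u2 s1 s2)
  from st_app(6) show ?case
  proof (cases rule: dist.cases)
    case (beta b)
    then obtain w where w: "h\<^sup>*\<^sup>* u1 (Lam w)" "st w b" using st_app(2) st_lam_inv by blast
    have "h\<^sup>*\<^sup>* t (App (Lam w) u2)" using st_app(1) hs_app[OF w(1)] by (rule rtranclp_trans)
    then have "h\<^sup>*\<^sup>* t (subst w 0 u2)" by (rule rtranclp.rtrancl_into_rtrancl) (rule h_beta)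
    moreover have "st (subst w 0 u2) (subst b 0 s2)" using w(2) st_app(4) by (rule st_subst)
    ultimately show ?thesis using beta by (auto intro: st_pre)
  next
    case (app_pair a b)
    then obtain w1 w2 where w: "h\<^sup>*\<^sup>* u1 (Pair w1 w2)" "st w1 a" "st w2 b"
      using st_app(2) st_pair_inv by blast
    have "h\<^sup>*\<^sup>* t (App (Pair w1 w2) u2)" using st_app(1) hs_app[OF w(1)] by (rule rtranclp_trans)
    then have "h\<^sup>*\<^sup>* t (Pair (App w1 u2) (App w2 u2))"
      by (rule rtranclp.rtrancl_into_rtrancl) (rule h_app_pair)
    moreover have "st (Pair (App w1 u2) (App w2 u2)) (Pair (App a s2) (App b s2))"
      using w st_app(4) by (auto intro!: st.intros)
    ultimately show ?thesis using app_pair by (auto intro: st_pre)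
  qed (use st_app in \<open>auto intro: st.intros\<close>)
next
  case (st_pair t u1 u2 s1 s2)
  from st_pair(6) show ?case
    by (cases rule: dist.cases) (use st_pair in \<open>auto intro: st.intros\<close>)
next
  case (st_prj1 t u s)
  from st_prj1(4) show ?case
  proof (cases rule: dist.cases)
    case (pi1 t2)
    then obtain w1 w2 where w: "h\<^sup>*\<^sup>* u (Pair w1 w2)" "st w1 s'"
      using st_prj1(2) st_pair_inv by blast
    have "h\<^sup>*\<^sup>* t (Prj1 (Pair w1 w2))" using st_prj1(1) hs_prj1[OF w(1)] by (rule rtranclp_trans)
    then have "h\<^sup>*\<^sup>* t w1" by (rule rtranclp.rtrancl_into_rtrancl) (rule h_pi1)
    then show ?thesis using w(2) by (rule st_pre)
  next
    case (pi1_lam b)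
    then obtain w where w: "h\<^sup>*\<^sup>* u (Lam w)" "st w b" using st_prj1(2) st_lam_inv by blast
    have "h\<^sup>*\<^sup>* t (Prj1 (Lam w))" using st_prj1(1) hs_prj1[OF w(1)] by (rule rtranclp_trans)
    then have "h\<^sup>*\<^sup>* t (Lam (Prj1 w))" by (rule rtranclp.rtrancl_into_rtrancl) (rule h_pi1_lam)
    moreover have "st (Lam (Prj1 w)) (Lam (Prj1 b))" using w(2) by (auto intro!: st.intros)
    ultimately show ?thesis using pi1_lam by (auto intro: st_pre)
  qed (use st_prj1 in \<open>auto intro: st.intros\<close>)
next
  case (st_prj2 t u s)
  from st_prj2(4) show ?case
  proof (cases rule: dist.cases)
    case (pi2 t1)
    then obtain w1 w2 where w: "h\<^sup>*\<^sup>* u (Pair w1 w2)" "st w2 s'"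
      using st_prj2(2) st_pair_inv by blast
    have "h\<^sup>*\<^sup>* t (Prj2 (Pair w1 w2))" using st_prj2(1) hs_prj2[OF w(1)] by (rule rtranclp_trans)
    then have "h\<^sup>*\<^sup>* t w2" by (rule rtranclp.rtrancl_into_rtrancl) (rule h_pi2)
    then show ?thesis using w(2) by (rule st_pre)
  next
    case (pi2_lam b)
    then obtain w where w: "h\<^sup>*\<^sup>* u (Lam w)" "st w b" using st_prj2(2) st_lam_inv by blast
    have "h\<^sup>*\<^sup>* t (Prj2 (Lam w))" using st_prj2(1) hs_prj2[OF w(1)] by (rule rtranclp_trans)
    then have "h\<^sup>*\<^sup>* t (Lam (Prj2 w))" by (rule rtranclp.rtrancl_into_rtrancl) (rule h_pi2_lam)
    moreover have "st (Lam (Prj2 w)) (Lam (Prj2 b))" using w(2) by (auto intro!: st.intros)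
    ultimately show ?thesis using pi2_lam by (auto intro: st_pre)
  qed (use st_prj2 in \<open>auto intro: st.intros\<close>)
qed

lemma dists_st: "dist\<^sup>*\<^sup>* t s \<Longrightarrow> st t s"
  by (induct rule: rtranclp_induct) (auto intro: st_refl st_step)

lemma h_neutral: "h t t' \<Longrightarrow> neutral t"
  by (cases rule: h.cases) auto

lemma h_lo: "h t t' \<Longrightarrow> lo t t'"
  by (induct rule: h.induct) (auto intro: lo.intros h_neutral)

lemma hs_los: "h\<^sup>*\<^sup>* t t' \<Longrightarrow> lo\<^sup>*\<^sup>* t t'"
  by (induct rule: rtranclp_induct) (auto intro: rtranclp.rtrancl_into_rtrancl h_lo)

lemma lo_nonneutral: "lo t t' \<Longrightarrow> \<not> neutral t \<Longrightarrow> \<not> neutral t'"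
  by (cases rule: lo.cases) auto

lemma los_neutral: "lo\<^sup>*\<^sup>* t t' \<Longrightarrow> neutral t' \<Longrightarrow> neutral t"
  by (induct rule: rtranclp_induct) (auto dest: lo_nonneutral)

lemma los_lam: "lo\<^sup>*\<^sup>* t t' \<Longrightarrow> lo\<^sup>*\<^sup>* (Lam t) (Lam t')"
  by (induct rule: rtranclp_induct) (auto intro: rtranclp.rtrancl_into_rtrancl lo_lam)
lemma los_prj1: "lo\<^sup>*\<^sup>* t t' \<Longrightarrow> lo\<^sup>*\<^sup>* (Prj1 t) (Prj1 t')"
  by (induct rule: rtranclp_induct) (auto intro: rtranclp.rtrancl_into_rtrancl lo_prj1)
lemma los_prj2: "lo\<^sup>*\<^sup>* t t' \<Longrightarrow> lo\<^sup>*\<^sup>* (Prj2 t) (Prj2 t')"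
  by (induct rule: rtranclp_induct) (auto intro: rtranclp.rtrancl_into_rtrancl lo_prj2)
lemma los_pairL: "lo\<^sup>*\<^sup>* t t' \<Longrightarrow> lo\<^sup>*\<^sup>* (Pair t u) (Pair t' u)"
  by (induct rule: rtranclp_induct) (auto intro: rtranclp.rtrancl_into_rtrancl lo_pairL)
lemma los_pairR: "lo\<^sup>*\<^sup>* t t' \<Longrightarrow> normal u \<Longrightarrow> lo\<^sup>*\<^sup>* (Pair u t) (Pair u t')"
  by (induct rule: rtranclp_induct) (auto intro: rtranclp.rtrancl_into_rtrancl lo_pairR)
lemma los_appR: "lo\<^sup>*\<^sup>* t t' \<Longrightarrow> normal u \<Longrightarrow> neutral u \<Longrightarrow> lo\<^sup>*\<^sup>* (App u t) (App u t')"
  by (induct rule: rtranclp_induct) (auto intro: rtranclp.rtrancl_into_rtrancl lo_appR)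
lemma los_appL: "lo\<^sup>*\<^sup>* t t' \<Longrightarrow> neutral t' \<Longrightarrow> lo\<^sup>*\<^sup>* (App t u) (App t' u)"
proof (induct rule: converse_rtranclp_induct)
  case base then show ?case by simp
next
  case (step y z)
  then have "neutral y"
    by (meson converse_rtranclp_into_rtranclp los_neutral)
  then have "lo (App y u) (App z u)" using step(1) by (auto intro: lo_appL)
  then show ?case using step by (auto intro: converse_rtranclp_into_rtranclp)
qed

lemma normal_lam: "normal (Lam s) \<Longrightarrow> normal s"
  unfolding normal_def by (auto intro: dist.intros)
lemma normal_prj1: "normal (Prj1 s) \<Longrightarrow> normal s"
  unfolding normal_def by (auto intro: dist.intros)
lemma normal_prj2: "normal (Prj2 s) \<Longrightarrow> normal s"
  unfolding normal_def by (auto intro: dist.intros)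
lemma normal_pair: "normal (Pair a b) \<Longrightarrow> normal a \<and> normal b"
  unfolding normal_def by (auto intro: dist.intros)
lemma normal_app: "normal (App a b) \<Longrightarrow> normal a \<and> normal b \<and> neutral a"
  unfolding normal_def
  by (cases a) (auto intro: dist.intros)

lemma st_los: "st t s \<Longrightarrow> normal s \<Longrightarrow> lo\<^sup>*\<^sup>* t s"
proof (induct rule: st.induct)
  case (st_var t x)
  then show ?case by (auto intro: hs_los)
next
  case (st_lam t u s)
  then show ?case using hs_los[OF st_lam(1)] los_lam normal_lam by (meson rtranclp_trans)
next
  case (st_app t u1 u2 s1 s2)
  from normal_app[OF st_app(6)] have n: "normal s1" "normal s2" "neutral s1" by auto
  have "lo\<^sup>*\<^sup>* (App u1 u2) (App s1 u2)" using st_app(3) n by (auto intro: los_appL)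
  moreover have "lo\<^sup>*\<^sup>* (App s1 u2) (App s1 s2)" using st_app(5) n by (auto intro: los_appR)
  ultimately show ?case using hs_los[OF st_app(1)] by (meson rtranclp_trans)
next
  case (st_pair t u1 u2 s1 s2)
  from normal_pair[OF st_pair(6)] have n: "normal s1" "normal s2" by auto
  have "lo\<^sup>*\<^sup>* (Pair u1 u2) (Pair s1 u2)" using st_pair(3) n by (auto intro: los_pairL)
  moreover have "lo\<^sup>*\<^sup>* (Pair s1 u2) (Pair s1 s2)" using st_pair(5) n by (auto intro: los_pairR)
  ultimately show ?case using hs_los[OF st_pair(1)] by (meson rtranclp_trans)
next
  case (st_prj1 t u s)
  then show ?case using hs_los[OF st_prj1(1)] los_prj1 normal_prj1 by (meson rtranclp_trans)
next
  case (st_prj2 t u s)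
  then show ?case using hs_los[OF st_prj2(1)] los_prj2 normal_prj2 by (meson rtranclp_trans)
qed

theorem theorem2:
  fixes t s :: dterm
  assumes "dist\<^sup>*\<^sup>* t s" and "normal s"
  shows "lo\<^sup>*\<^sup>* t s"
  using st_los[OF dists_st[OF assms(1)] assms(2)] .

end
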